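(* In the setting of finite contexts $\mathcal Z=\{z_1,\dots,z_m\}$ with distribution $p$ and a finite trajectory set $\mathcal T$, assume that for every $z\in\mathcal Z$ the map $\tau\mapsto u(\tau,z)$ is injective on $\mathcal T$, and that the set $X_{\mathrm{ics}}$ of inconsistent pairs is nonempty. Fix $k$. If $$p(z_k)>\max_{(\tau,\tau')\in X_{\mathrm{ics}}}\frac{1+\max_i N(\tau,\tau',z_i)}{2+N(\tau,\tau',z_k)+\max_i N(\tau,\tau',z_i)},$$ then for all $\tau^1,\tau^2\in\mathcal T$ with $u(\tau^1,z_k)>u(\tau^2,z_k)$ we have $BC_p(\tau^1)>BC_p(\tau^2)$, hence $\hat u(\tau^1)>\hat u(\tau^2)$; consequently $\hat u(\tau^1)>\hat u(\tau^2)\iff u(\tau^1,z_k)>u(\tau^2,z_k)$ for all $\tau^1,\tau^2\in\mathcal T$.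
   Context: A pair $(\tau^1,\tau^2)$ is consistent if $u(\tau^1,z)\ge u(\tau^2,z)$ for all $z$ or $u(\tau^1,z)\le u(\tau^2,z)$ for all $z$; otherwise inconsistent. $N(\tau^1,\tau^2,z)=\sum_{\tau\in\mathcal T}\big(\mathbb I\{u(\tau^1,z)>u(\tau,z)>u(\tau^2,z)\}+\mathbb I\{u(\tau^1,z)<u(\tau,z)<u(\tau^2,z)\}\big)$. $O_u(a,b,z)=\tfrac12$ if $u(a,z)=u(b,z)$, $1$ if $u(a,z)>u(b,z)$, $0$ otherwise. $BC_p(a)=\frac{1}{|\mathcal T|}\sum_{b\in\mathcal T}\mathbb E_{z\sim p}[O_u(a,b,z)]$. The learned utility $\hat u:\mathcal T\to\mathbb R$ satisfies $\hat u(a)>\hat u(b)\iff BC_p(a)>BC_p(b)$. *)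

theory Defs
  imports Main "HOL-Library.Library"
begin

definition consistent :: "('t \<Rightarrow> 'z \<Rightarrow> real) \<Rightarrow> 'z set \<Rightarrow> 't \<Rightarrow> 't \<Rightarrow> bool" where
  "consistent u Z a b \<longleftrightarrow> (\<forall>z\<in>Z. u a z \<ge> u b z) \<or> (\<forall>z\<in>Z. u a z \<le> u b z)"

definition inconsistent_pairs :: "('t \<Rightarrow> 'z \<Rightarrow> real) \<Rightarrow> 'z set \<Rightarrow> 't set \<Rightarrow> ('t \<times> 't) set" where
  "inconsistent_pairs u Z T = {(a, b). a \<in> T \<and> b \<in> T \<and> \<not> consistent u Z a b}"

definition Nbetween :: "('t \<Rightarrow> 'z \<Rightarrow> real) \<Rightarrow> 't set \<Rightarrow> 't \<Rightarrow> 't \<Rightarrow> 'z \<Rightarrow> nat" where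
  "Nbetween u T a b z =
     (\<Sum>t\<in>T. (if u a z > u t z \<and> u t z > u b z then 1 else 0)
           + (if u a z < u t z \<and> u t z < u b z then 1 else 0))"

definition O_u :: "('t \<Rightarrow> 'z \<Rightarrow> real) \<Rightarrow> 't \<Rightarrow> 't \<Rightarrow> 'z \<Rightarrow> real" where
  "O_u u a b z = (if u a z = u b z then 1/2 else if u a z > u b z then 1 else 0)"

definition BC :: "('t \<Rightarrow> 'z \<Rightarrow> real) \<Rightarrow> 'z set \<Rightarrow> ('z \<Rightarrow> real) \<Rightarrow> 't set \<Rightarrow> 't \<Rightarrow> real" where
  "BC u Z p T a = (1 / real (card T)) * (\<Sum>b\<in>T. (\<Sum>z\<in>Z. p z * O_u u a b z))"

end

theory Submission
  imports Defs
begin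

lemma Nbetween_sym: "Nbetween u T a b z = Nbetween u T b a z"
  unfolding Nbetween_def by (rule sum.cong) auto

lemma diff_sum_gt:
  assumes finT: "finite T" and inj: "inj_on (\<lambda>t. u t z) T" and a: "a \<in> T" and b: "b \<in> T"
    and gt: "u a z > u b z"
  shows "(\<Sum>t\<in>T. O_u u a t z - O_u u b t z) = real (Nbetween u T a b z) + 1"
proof -
  have pw: "O_u u a t z - O_u u b t z = (if u a z > u t z \<and> u t z > u b z then 1 else 0)
      + (if t = a then 1/2 else 0) + (if t = b then 1/2 else 0)" if t: "t \<in> T" for t
  proof -
    have ea: "u t z = u a z \<Longrightarrow> t = a" using inj t a by (auto simp: inj_on_def)
    have eb: "u t z = u b z \<Longrightarrow> t = b" using inj t b by (auto simp: inj_on_def)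
    show ?thesis using gt ea eb by (auto simp: O_u_def)
  qed
  have ab: "a \<noteq> b" using gt by auto
  have "(\<Sum>t\<in>T. O_u u a t z - O_u u b t z) = (\<Sum>t\<in>T. (if u a z > u t z \<and> u t z > u b z then 1 else 0)
      + (if t = a then 1/2 else 0) + (if t = b then 1/2 else 0))"
    using pw by (rule sum.cong[OF refl])
  also have "\<dots> = (\<Sum>t\<in>T. (if u a z > u t z \<and> u t z > u b z then 1 else 0)) + 1"
    using finT a b by (simp add: sum.distrib)
  also have "(\<Sum>t\<in>T. (if u a z > u t z \<and> u t z > u b z then 1 else 0)) = real (Nbetween u T a b z)"
    unfolding Nbetween_def of_nat_sum using gt by (intro sum.cong) auto
  finally show ?thesis .
qed

lemma diff_sum:
  assumes finT: "finite T" and inj: "inj_on (\<lambda>t. u t z) T" and a: "a \<in> T" and b: "b \<in> T"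
  shows "(\<Sum>t\<in>T. O_u u a t z - O_u u b t z) =
     (if u a z > u b z then real (Nbetween u T a b z) + 1
      else if u a z < u b z then - (real (Nbetween u T a b z) + 1) else 0)"
proof -
  consider "u a z > u b z" | "u a z < u b z" | "u a z = u b z" by linarith
  then show ?thesis
  proof cases
    case 1 then show ?thesis using diff_sum_gt[of T u z a b] assms by simp
  next
    case 2
    have "(\<Sum>t\<in>T. O_u u a t z - O_u u b t z) = - (\<Sum>t\<in>T. O_u u b t z - O_u u a t z)"
      by (simp add: sum_subtractf)
    also have "\<dots> = - (real (Nbetween u T a b z) + 1)"
      using diff_sum_gt[of T u z b a] finT inj a b 2 Nbetween_sym[of u T a b z] by simp
    finally show ?thesis using 2 by simp
  next
    case 3
    then have "\<And>t. O_u u a t z = O_u u b t z" by (simp add: O_u_def)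
    then show ?thesis using 3 by simp
  qed
qed

lemma BC_pos:
  fixes u :: "'t \<Rightarrow> 'z \<Rightarrow> real"
  assumes finZ: "finite Z" and finT: "finite T"
    and p_nonneg: "\<forall>z\<in>Z. p z \<ge> 0" and p_sum: "(\<Sum>z\<in>Z. p z) = 1"
    and inj: "\<forall>z\<in>Z. inj_on (\<lambda>t. u t z) T"
    and ics_ne: "inconsistent_pairs u Z T \<noteq> {}"
    and zk: "zk \<in> Z"
    and cond: "p zk > Max ((\<lambda>(a, b).
                   (1 + real (Max ((\<lambda>z. Nbetween u T a b z) ` Z))) /
                   (2 + real (Nbetween u T a b zk) + real (Max ((\<lambda>z. Nbetween u T a b z) ` Z))))
                 ` inconsistent_pairs u Z T)"
    and t1: "t1 \<in> T" and t2: "t2 \<in> T" and gt: "u t1 zk > u t2 zk"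
  shows "BC u Z p T t1 > BC u Z p T t2"
proof -
  define f where "f = (\<lambda>(a, b).
                   (1 + real (Max ((\<lambda>z. Nbetween u T a b z) ` Z))) /
                   (2 + real (Nbetween u T a b zk) + real (Max ((\<lambda>z. Nbetween u T a b z) ` Z))))"
  have finI: "finite (inconsistent_pairs u Z T)"
    by (rule finite_subset[of _ "T \<times> T"]) (auto simp: inconsistent_pairs_def finT)
  have fpos: "f x > 0" for x unfolding f_def by (auto split: prod.splits)
  obtain x where x: "x \<in> inconsistent_pairs u Z T" using ics_ne by auto
  have "f x \<le> Max (f ` inconsistent_pairs u Z T)" using finI x by auto
  hence pk: "p zk > 0" using cond fpos[of x] unfolding f_def by linarith
  define D where "D z = (\<Sum>t\<in>T. O_u u t1 t z - O_u u t2 t z)" for z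
  have Dz: "D z = (if u t1 z > u t2 z then real (Nbetween u T t1 t2 z) + 1
      else if u t1 z < u t2 z then - (real (Nbetween u T t1 t2 z) + 1) else 0)" if "z \<in> Z" for z
  proof -
    have "inj_on (\<lambda>t. u t z) T" using inj that by blast
    from diff_sum[of T u z t1 t2, OF finT this t1 t2] show ?thesis unfolding D_def .
  qed
  have cardT: "card T > 0" using t1 finT card_gt_0_iff by blast
  have S: "(\<Sum>b\<in>T. \<Sum>z\<in>Z. p z * O_u u t1 b z) - (\<Sum>b\<in>T. \<Sum>z\<in>Z. p z * O_u u t2 b z)
      = (\<Sum>z\<in>Z. p z * D z)"
  proof -
    have "(\<Sum>b\<in>T. \<Sum>z\<in>Z. p z * O_u u t1 b z) - (\<Sum>b\<in>T. \<Sum>z\<in>Z. p z * O_u u t2 b z)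
       = (\<Sum>b\<in>T. \<Sum>z\<in>Z. p z * (O_u u t1 b z - O_u u t2 b z))"
      by (simp only: sum_subtractf[symmetric] right_diff_distrib)
    also have "\<dots> = (\<Sum>z\<in>Z. \<Sum>b\<in>T. p z * (O_u u t1 b z - O_u u t2 b z))"
      by (rule sum.swap)
    also have "\<dots> = (\<Sum>z\<in>Z. p z * D z)"
      unfolding D_def by (simp only: sum_distrib_left)
    finally show ?thesis .
  qed
  have Dk: "D zk = real (Nbetween u T t1 t2 zk) + 1" using Dz[OF zk] gt by simp
  have split: "(\<Sum>z\<in>Z. p z * D z) = p zk * D zk + (\<Sum>z\<in>Z - {zk}. p z * D z)"
    using finZ zk by (simp add: sum.remove)
  have psplit: "(\<Sum>z\<in>Z - {zk}. p z) = 1 - p zk"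
    using finZ zk p_sum by (simp add: sum.remove)
  have pos: "(\<Sum>z\<in>Z. p z * D z) > 0"
  proof (cases "consistent u Z t1 t2")
    case True
    then have "\<forall>z\<in>Z. u t1 z \<ge> u t2 z" unfolding consistent_def using gt zk by force
    then have "\<forall>z\<in>Z. D z \<ge> 0" using Dz by auto
    then have "(\<Sum>z\<in>Z - {zk}. p z * D z) \<ge> 0" using p_nonneg by (intro sum_nonneg) auto
    moreover have "p zk * D zk > 0" using pk Dk by simp
    ultimately show ?thesis using split by linarith
  next
    case False
    then have ic: "(t1, t2) \<in> inconsistent_pairs u Z T" using t1 t2 by (simp add: inconsistent_pairs_def)
    define M where "M = Max ((\<lambda>z. Nbetween u T t1 t2 z) ` Z)"
    define Nk where "Nk = Nbetween u T t1 t2 zk"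
    have NM: "Nbetween u T t1 t2 z \<le> M" if "z \<in> Z" for z
      unfolding M_def using finZ that by auto
    have "f (t1, t2) \<le> Max (f ` inconsistent_pairs u Z T)" using finI ic by auto
    hence c: "p zk > (1 + real M) / (2 + real Nk + real M)"
      using cond unfolding f_def M_def Nk_def by simp
    hence c2: "p zk * (2 + real Nk + real M) > 1 + real M"
      by (simp add: pos_divide_less_eq add_pos_nonneg)
    have Dge: "D z \<ge> - (real M + 1)" if "z \<in> Z" for z
      using Dz[OF that] NM[OF that] by auto
    have "(\<Sum>z\<in>Z - {zk}. p z * (- (real M + 1))) \<le> (\<Sum>z\<in>Z - {zk}. p z * D z)"
      using p_nonneg Dge by (intro sum_mono mult_left_mono) auto
    moreover have "(\<Sum>z\<in>Z - {zk}. p z * (- (real M + 1))) = - (real M + 1) * (1 - p zk)"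
      using psplit by (simp add: sum_distrib_right[symmetric] mult.commute)
    ultimately have "(\<Sum>z\<in>Z - {zk}. p z * D z) \<ge> - (real M + 1) * (1 - p zk)" by linarith
    moreover have "p zk * D zk = p zk * (real Nk + 1)" using Dk Nk_def by simp
    ultimately show ?thesis using split c2 by (simp add: algebra_simps)
  qed
  show ?thesis unfolding BC_def using S pos cardT
    by (simp add: divide_strict_right_mono)
qed

theorem mainTheorem4:
  fixes u :: "'t \<Rightarrow> 'z \<Rightarrow> real" and Z :: "'z set" and p :: "'z \<Rightarrow> real"
    and T :: "'t set" and zk :: 'z and uhat :: "'t \<Rightarrow> real"
  assumes finZ: "finite Z" and finT: "finite T"
    and p_nonneg: "\<forall>z\<in>Z. p z \<ge> 0" and p_sum: "(\<Sum>z\<in>Z. p z) = 1"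
    and inj: "\<forall>z\<in>Z. inj_on (\<lambda>t. u t z) T"
    and ics_ne: "inconsistent_pairs u Z T \<noteq> {}"
    and zk: "zk \<in> Z"
    and uhat: "\<forall>a\<in>T. \<forall>b\<in>T. (uhat a > uhat b \<longleftrightarrow> BC u Z p T a > BC u Z p T b)"
    and cond: "p zk > Max ((\<lambda>(a, b).
                   (1 + real (Max ((\<lambda>z. Nbetween u T a b z) ` Z))) /
                   (2 + real (Nbetween u T a b zk) + real (Max ((\<lambda>z. Nbetween u T a b z) ` Z))))
                 ` inconsistent_pairs u Z T)"
  shows "(\<forall>t1\<in>T. \<forall>t2\<in>T. u t1 zk > u t2 zk \<longrightarrow>
            BC u Z p T t1 > BC u Z p T t2 \<and> uhat t1 > uhat t2)
       \<and> (\<forall>t1\<in>T. \<forall>t2\<in>T. uhat t1 > uhat t2 \<longleftrightarrow> u t1 zk > u t2 zk)"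
proof -
  have A: "BC u Z p T t1 > BC u Z p T t2" if "t1 \<in> T" "t2 \<in> T" "u t1 zk > u t2 zk" for t1 t2
    using BC_pos[OF finZ finT p_nonneg p_sum inj ics_ne zk cond that] .
  have B: "uhat t1 > uhat t2 \<longleftrightarrow> u t1 zk > u t2 zk" if t: "t1 \<in> T" "t2 \<in> T" for t1 t2
  proof
    assume h: "uhat t1 > uhat t2"
    show "u t1 zk > u t2 zk"
    proof (rule ccontr)
      assume "\<not> u t1 zk > u t2 zk"
      then consider "u t1 zk = u t2 zk" | "u t2 zk > u t1 zk" by linarith
      then show False
      proof cases
        case 1
        then have "t1 = t2" using inj zk t by (auto simp: inj_on_def)
        then show False using h by simp
      next
        case 2
        then show False using A[OF t(2) t(1)] h uhat t by force
      qed
    qed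
  next
    assume "u t1 zk > u t2 zk"
    then show "uhat t1 > uhat t2" using A[OF t] uhat t by blast
  qed
  show ?thesis using A B uhat by blast
qed

end
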